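(* Let $n\ge 2$, $\delta\in(0,1)$, and let $X_{1},\dots,X_{n}\in[0,1]$ be IID real random variables with common law $F$, $X\sim F$. Then with probability at least $1-\delta$, \[ \bar{X}_{n}-\mathbb{E}_{F}X\le\sqrt{\frac{1+2S_{n}^{2}}{3n}\log\frac{2}{\delta}}+\sqrt{\frac{1}{12n}\sqrt{\frac{8}{\lfloor n/2\rfloor}}\log^{3/2}\left(\frac{2}{\delta}\right)}, \] and the same holds (with probability at least $1-\delta$) with $\bar{X}_{n}-\mathbb{E}_{F}X$ replaced by $\mathbb{E}_{F}X-\bar{X}_{n}$.
   Context: $\bar X_n=n^{-1}\sum_{i=1}^n X_i$, $S_{n}^{2}=(n-1)^{-1}\sum_{i=1}^{n}(X_{i}-\bar{X}_{n})^{2}$ is the unbiased sample variance, $\mathbb{E}_F X$ is the mean of $X\sim F$. $\lfloor\cdot\rfloor$ is the floor function. *)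

theory Defs
  imports "HOL-Probability.Probability"
begin

definition sample_mean :: "nat \<Rightarrow> (nat \<Rightarrow> real) \<Rightarrow> real" where
  "sample_mean n x = (\<Sum>i<n. x i) / real n"

definition sample_var :: "nat \<Rightarrow> (nat \<Rightarrow> real) \<Rightarrow> real" where
  "sample_var n x = (\<Sum>i<n. (x i - sample_mean n x)^2) / (real n - 1)"

definition emp_bernstein_bound :: "nat \<Rightarrow> real \<Rightarrow> real \<Rightarrow> real" where
  "emp_bernstein_bound n \<delta> s2 =
     sqrt ((1 + 2 * s2) / (3 * real n) * ln (2 / \<delta>))
   + sqrt (1 / (12 * real n) * sqrt (8 / real (n div 2)) * (ln (2 / \<delta>)) powr (3/2))"

end

theory Submission
  imports Defs
begin


lemma taylor2_lb:
  fixes f f' f'' :: "real \<Rightarrow> real"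
  assumes d1: "\<And>t. min c x \<le> t \<Longrightarrow> t \<le> max c x \<Longrightarrow> (f has_real_derivative f' t) (at t)"
    and d2: "\<And>t. min c x \<le> t \<Longrightarrow> t \<le> max c x \<Longrightarrow> (f' has_real_derivative f'' t) (at t)"
    and pos: "\<And>t. min c x \<le> t \<Longrightarrow> t \<le> max c x \<Longrightarrow> f'' t \<ge> 0"
  shows "f x \<ge> f c + f' c * (x - c)"
proof (cases "x = c")
  case True thus ?thesis by simp
next
  case False
  define D where "D = (\<lambda>m::nat. if m = 0 then f else if m = 1 then f' else f'')"
  have "\<exists>t. (if x < c then x < t \<and> t < c else c < t \<and> t < x) \<and>
    f x = (\<Sum>m<2. (D m c / fact m) * (x - c)^m) + (D 2 t / fact 2) * (x - c)^2"
    apply (rule Taylor[of 2 D f "min c x" "max c x" c x])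
    using d1 d2 False by (auto simp: D_def)
  then obtain t where t: "(if x < c then x < t \<and> t < c else c < t \<and> t < x)"
    and eq: "f x = (\<Sum>m<2. (D m c / fact m) * (x - c)^m) + (D 2 t / fact 2) * (x - c)^2" by blast
  have "min c x \<le> t" "t \<le> max c x" using t by (auto split: if_splits)
  hence "f'' t \<ge> 0" by (rule pos)
  moreover have "f x = f c + f' c * (x - c) + f'' t / 2 * (x - c)^2"
    using eq by (simp add: D_def numeral_2_eq_2 lessThan_Suc)
  moreover have "f'' t / 2 * (x - c)^2 \<ge> 0" using \<open>f'' t \<ge> 0\<close> by simp
  ultimately show ?thesis by linarith
qed

lemma tanh_chord:
  fixes a s :: real
  assumes "0 \<le> s" "s \<le> a"
  shows "s * tanh a \<le> a * tanh s"
proof -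
  define g where "g = (\<lambda>t. s * tanh a - a * tanh t)"
  define F where "F = (\<lambda>t::real. t * tanh a - a * tanh t)"
  define F' where "F' = (\<lambda>t::real. tanh a - a * (1 - tanh t ^ 2))"
  define F'' where "F'' = (\<lambda>t::real. a * (2 * tanh t * (1 - tanh t ^ 2)))"
  have cosh: "cosh t \<noteq> 0" for t :: real by (metis cosh_real_pos less_irrefl)
  have D1: "(F has_real_derivative F' t) (at t)" for t
    unfolding F_def F'_def by (auto intro!: derivative_eq_intros simp: cosh)
  have D2: "(F' has_real_derivative F'' t) (at t)" for t
    unfolding F'_def F''_def by (auto intro!: derivative_eq_intros simp: cosh algebra_simps power2_eq_square)
  have P: "F'' t \<ge> 0" if "0 \<le> t" for t
  proof -
    have "tanh t \<ge> 0" using that by simp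
    moreover have "1 - tanh t ^ 2 \<ge> 0" using tanh_real_bounds[of t] by (auto simp: abs_square_le_1)
    ultimately show ?thesis unfolding F''_def using assms by auto
  qed
  have h1: "F 0 \<ge> F s + F' s * (0 - s)"
    by (rule taylor2_lb[OF D1 D2]) (use P assms in auto)
  have h2: "F a \<ge> F s + F' s * (a - s)"
    by (rule taylor2_lb[OF D1 D2]) (use P assms in auto)
  have "F 0 = 0" "F a = 0" by (auto simp: F_def)
  with h1 h2 have i1: "F s \<le> F' s * s" and i2: "F s \<le> - (F' s * (a - s))" by auto
  have "(a - s) * F s \<le> (a - s) * (F' s * s)" using i1 assms by (intro mult_left_mono) auto
  moreover have "s * F s \<le> s * (- (F' s * (a - s)))" using i2 assms by (intro mult_left_mono) auto
  ultimately have "(a - s) * F s + s * F s \<le> 0" by (simp add: algebra_simps)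
  hence "a * F s \<le> 0" by (simp add: algebra_simps)
  show ?thesis
  proof (cases "a = 0")
    case True thus ?thesis using assms by simp
  next
    case False
    hence "F s \<le> 0" using \<open>a * F s \<le> 0\<close> assms by (simp add: mult_le_0_iff)
    thus ?thesis by (simp add: F_def)
  qed
qed

lemma cosh_ne0: "cosh (t::real) \<noteq> 0" by (metis cosh_real_pos less_irrefl)

lemma tanh_sq_le1: "tanh (t::real) ^ 2 \<le> 1"
  using tanh_real_bounds[of t] by (auto simp: abs_square_le_1)

lemma lncosh_bound_pos:
  fixes a x :: real
  assumes a: "a \<ge> 0"
  shows "ln (cosh (a + x)) - ln (cosh a) - x * tanh a \<le> x^2 * (3 - (tanh a)^2) / 6"
proof -
  define T where "T = tanh a"
  have T0: "T \<ge> 0" using a by (simp add: T_def)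
  define H where "H = (\<lambda>x. x^2 * (3 - T^2) / 6 - ln (cosh (a + x)) + ln (cosh a) + x * T)"
  define H' where "H' = (\<lambda>x. x * (3 - T^2) / 3 - tanh (a + x) + T)"
  define H'' where "H'' = (\<lambda>x. tanh (a + x) ^ 2 - T^2 / 3)"
  have D1: "(H has_real_derivative H' t) (at t)" for t
    unfolding H_def H'_def
    by (auto intro!: derivative_eq_intros simp: cosh_ne0 cosh_real_pos tanh_def power2_eq_square field_simps)
  have D2: "(H' has_real_derivative H'' t) (at t)" for t
    unfolding H'_def H''_def
    by (auto intro!: derivative_eq_intros simp: cosh_ne0 field_simps power2_eq_square)
  have H0: "H 0 = 0" "H' 0 = 0" by (auto simp: H_def H'_def T_def)
  have goal: "H x \<ge> 0 \<Longrightarrow> ?thesis" by (simp add: H_def T_def)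
  have Hpos: "H'' t \<ge> 0" if "tanh (a + t) ^ 2 \<ge> T^2" for t
    using that zero_le_power2[of T] unfolding H''_def by linarith
  have case1: "H y \<ge> 0" if "y \<ge> 0" for y
  proof -
    have "H y \<ge> H 0 + H' 0 * (y - 0)"
    proof (rule taylor2_lb[OF D1 D2])
      fix t assume "min 0 y \<le> t" "t \<le> max 0 y"
      hence "t \<ge> 0" using that by simp
      hence "tanh (a + t) \<ge> T" using a by (simp add: T_def)
      hence "tanh (a + t) ^ 2 \<ge> T^2" using T0 by (simp add: power_mono)
      thus "H'' t \<ge> 0" by (rule Hpos)
    qed
    thus ?thesis using H0 by simp
  qed
  have at2a: "H (-2*a) \<ge> 0 \<and> H' (-2*a) \<le> 0 \<and> (\<forall>y\<in>{-2*a..0}. H y \<ge> 0)"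
  proof (cases "a = 0")
    case True thus ?thesis using H0 by simp
  next
    case False
    hence apos: "a > 0" using a by simp
    define P where "P = (\<lambda>x. T^2 * x^2 * (x + 2*a)^2 / (12 * a^2))"
    define P' where "P' = (\<lambda>x. T^2 * (4*x^3 + 12*a*x^2 + 8*a^2*x) / (12 * a^2))"
    define P'' where "P'' = (\<lambda>x. T^2 * (12*x^2 + 24*a*x + 8*a^2) / (12 * a^2))"
    have E1: "(P has_real_derivative P' t) (at t)" for t
      unfolding P_def P'_def
      using apos by (auto intro!: derivative_eq_intros simp: field_simps power2_eq_square power3_eq_cube)
    have E2: "(P' has_real_derivative P'' t) (at t)" for t
      unfolding P'_def P''_def
      using apos by (auto intro!: derivative_eq_intros simp: field_simps power2_eq_square power3_eq_cube)
    define R where "R = (\<lambda>x. H x - P x)"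
    define R' where "R' = (\<lambda>x. H' x - P' x)"
    define R'' where "R'' = (\<lambda>x. H'' x - P'' x)"
    have F1: "(R has_real_derivative R' t) (at t)" for t
      unfolding R_def R'_def by (rule DERIV_diff[OF D1 E1])
    have F2: "(R' has_real_derivative R'' t) (at t)" for t
      unfolding R'_def R''_def by (rule DERIV_diff[OF D2 E2])
    have R0: "R 0 = 0" "R' 0 = 0" using H0 by (auto simp: R_def R'_def P_def P'_def)
    have Rpos: "R'' t \<ge> 0" if "-2*a \<le> t" "t \<le> 0" for t
    proof -
      have ch: "\<bar>a + t\<bar> * T \<le> a * \<bar>tanh (a + t)\<bar>"
      proof (cases "a + t \<ge> 0")
        case True thus ?thesis using tanh_chord[of "a+t" a] that by (simp add: T_def)
      next
        case False
        have "-(a+t) * tanh a \<le> a * tanh (-(a+t))" by (rule tanh_chord) (use that False in auto)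
        hence "-(a+t) * T \<le> a * (- tanh (a+t))" by (simp only: tanh_minus T_def)
        moreover have "\<bar>a + t\<bar> = -(a+t)" "\<bar>tanh (a + t)\<bar> = - tanh (a+t)" using False by auto
        ultimately show ?thesis by simp
      qed
      have "(\<bar>a + t\<bar> * T)^2 \<le> (a * \<bar>tanh (a + t)\<bar>)^2"
        using ch T0 by (intro power_mono) auto
      hence "(a + t)^2 * T^2 \<le> a^2 * tanh (a + t)^2"
        by (simp add: power_mult_distrib)
      hence "T^2 * (a + t)^2 / a^2 \<le> tanh (a + t)^2"
        using apos by (simp add: field_simps)
      moreover have "R'' t = tanh (a + t)^2 - T^2 * (a + t)^2 / a^2"
        unfolding R''_def H''_def P''_def using apos
        by (simp add: field_simps power2_eq_square)
      ultimately show ?thesis by simp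
    qed
    have Rge: "R y \<ge> 0" if "-2*a \<le> y" "y \<le> 0" for y
    proof -
      have "R y \<ge> R 0 + R' 0 * (y - 0)"
        by (rule taylor2_lb[OF F1 F2]) (use that Rpos in auto)
      thus ?thesis using R0 by simp
    qed
    have Pnn: "P y \<ge> 0" for y using apos by (simp add: P_def)
    have HR: "H y = R y + P y" for y by (simp add: R_def)
    have R2: "R 0 \<ge> R (-2*a) + R' (-2*a) * (0 - (-2*a))"
      by (rule taylor2_lb[OF F1 F2]) (use apos Rpos in auto)
    have "R (-2*a) \<ge> 0" using Rge apos by simp
    with R2 R0 have "a * R' (-2*a) \<le> 0" by (simp add: algebra_simps)
    hence "R' (-2*a) \<le> 0" using apos by (simp add: mult_le_0_iff)
    moreover have "P' (-2*a) = 0" by (simp add: P'_def power2_eq_square power3_eq_cube algebra_simps)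
    ultimately have "H' (-2*a) \<le> 0" by (simp add: R'_def)
    moreover have "\<forall>y\<in>{-2*a..0}. H y \<ge> 0" using Rge Pnn HR by (simp add: add_nonneg_nonneg)
    ultimately show ?thesis using apos by auto
  qed
  show ?thesis
  proof (rule goal)
    consider "x \<ge> 0" | "-2*a \<le> x \<and> x \<le> 0" | "x < -2*a" by linarith
    thus "H x \<ge> 0"
    proof cases
      case 1 thus ?thesis by (rule case1)
    next
      case 2 thus ?thesis using at2a by auto
    next
      case 3
      have "H x \<ge> H (-2*a) + H' (-2*a) * (x - (-2*a))"
      proof (rule taylor2_lb[OF D1 D2])
        fix t assume "min (-2*a) x \<le> t" "t \<le> max (-2*a) x"
        hence "a + t \<le> -a" using 3 by simp
        hence "tanh (a + t) \<le> - T" by (simp add: T_def flip: tanh_minus)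
        hence "T \<le> - tanh (a + t)" by simp
        hence "T^2 \<le> (- tanh (a + t))^2" using T0 by (rule power_mono)
        hence "tanh (a + t) ^ 2 \<ge> T^2" by simp
        thus "H'' t \<ge> 0" by (rule Hpos)
      qed
      moreover have "H' (-2*a) * (x - (-2*a)) \<ge> 0"
        using at2a 3 by (intro mult_nonpos_nonpos) auto
      ultimately show ?thesis using at2a by linarith
    qed
  qed
qed

lemma lncosh_bound:
  fixes a x :: real
  shows "ln (cosh (a + x)) - ln (cosh a) - x * tanh a \<le> x^2 * (3 - (tanh a)^2) / 6"
proof (cases "a \<ge> 0")
  case True thus ?thesis by (rule lncosh_bound_pos)
next
  case False
  have h: "ln (cosh (-a + -x)) - ln (cosh (-a)) - (-x) * tanh (-a) \<le> (-x)^2 * (3 - (tanh (-a))^2) / 6"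
    using False by (intro lncosh_bound_pos) simp
  have e1: "cosh (-a + -x) = cosh (a + x)"
    by (metis cosh_minus minus_add_distrib)
  have e2: "cosh (-a) = cosh a" "tanh (-a) = - tanh a" by simp_all
  have "ln (cosh (a+x)) - ln (cosh a) - x * tanh a = ln (cosh (-a + -x)) - ln (cosh (-a)) - (-x) * tanh (-a)"
    unfolding e1 e2 by simp
  moreover have "x^2 * (3 - (tanh a)^2) / 6 = (-x)^2 * (3 - (tanh (-a))^2) / 6"
    unfolding e2 by simp
  ultimately show ?thesis using h by linarith
qed

lemma aux: fixes A X :: real assumes "A>0" "X>0"
  shows "X * (((A*X + inverse (A*X))/2) / ((A + inverse A)/2)) = (A*A*(X*X)+1)/(A*A+1)"
proof -
  have e1: "(A*X + inverse (A*X))/2 = (A*A*(X*X) + 1)/(2*A*X)" using assms by (simp add: field_simps)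
  have e2: "(A + inverse A)/2 = (A*A+1)/(2*A)" using assms by (simp add: field_simps)
  have p: "A*A+1 > 0" by (metis add_pos_nonneg zero_less_one mult_nonneg_nonneg less_le zero_le_square add.commute)
  show ?thesis unfolding e1 e2 using assms p by (simp add: divide_simps)
qed

lemma bern_bound:
  fixes q l :: real
  assumes q: "0 \<le> q" "q \<le> 1"
  shows "ln (1 - q + q * exp l) - q * l \<le> l^2 * (1 + 2*q*(1-q)) / 12"
proof -
  consider "q = 0" | "q = 1" | "0 < q \<and> q < 1" using q by linarith
  thus ?thesis
  proof cases
    case 1 thus ?thesis by simp
  next
    case 2 thus ?thesis by simp
  next
    case 3
    hence q0: "0 < q" and q1: "q < 1" by auto
    define a where "a = ln (q / (1 - q)) / 2"
    define x where "x = l / 2"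
    have ea: "exp a * exp a = q / (1 - q)"
    proof -
      have "exp a * exp a = exp (2 * a)" by (simp add: exp_add[symmetric])
      also have "\<dots> = q / (1 - q)" using q0 q1 by (simp add: a_def)
      finally show ?thesis .
    qed
    have ex: "exp x * exp x = exp l"
      by (simp add: x_def exp_add[symmetric])
    have cosh_eq: "cosh y = (exp y + inverse (exp y)) / 2" for y :: real
      by (simp add: cosh_def exp_minus)
    have tanh_eq: "tanh a = (exp a * exp a - 1) / (exp a * exp a + 1)"
    proof -
      have e: "exp (-2*a) = inverse (exp a * exp a)"
        by (simp add: exp_minus[symmetric] exp_add[symmetric])
      have p: "exp a * exp a > 0" by simp
      have "tanh a = (1 - exp (-2*a)) / (1 + exp (-2*a))" by (rule tanh_real_altdef)
      also have "\<dots> = (exp a * exp a - 1) / (exp a * exp a + 1)"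
      proof -
        have g: "(1 - inverse E) / (1 + inverse E) = (E - 1) / (E + 1)" if "E > 0" for E :: real
        proof -
          have "1 - inverse E = (E - 1) / E" "1 + inverse E = (E + 1) / E" using that by (simp_all add: field_simps)
          thus ?thesis using that by simp
        qed
        show ?thesis unfolding e by (rule g[OF p])
      qed
      finally show ?thesis .
    qed
    have T: "tanh a = 2 * q - 1"
      unfolding tanh_eq ea using q0 q1 by (simp add: field_simps)
    have key: "1 - q + q * exp l = exp x * (cosh (a + x) / cosh a)"
    proof -
      have pa: "exp a > 0" "exp x > 0" by simp_all
      have c1: "cosh (a + x) = (exp a * exp x + inverse (exp a * exp x)) / 2"
        by (simp add: cosh_eq exp_add)
      have c2: "cosh a = (exp a + inverse (exp a)) / 2" by (rule cosh_eq)
      have "exp x * (cosh (a + x) / cosh a) = (exp a * exp a * (exp x * exp x) + 1) / (exp a * exp a + 1)"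
        unfolding c1 c2 using pa by (rule aux)
      also have "\<dots> = (q / (1 - q) * exp l + 1) / (q / (1 - q) + 1)"
        by (simp only: ea ex)
      also have "\<dots> = 1 - q + q * exp l"
        using q0 q1 by (simp add: field_simps)
      finally show ?thesis by simp
    qed
    have lnk: "ln (1 - q + q * exp l) = x + ln (cosh (a + x)) - ln (cosh a)"
      unfolding key by (simp add: ln_mult ln_div cosh_real_pos)
    have "ln (1 - q + q * exp l) - q * l = ln (cosh (a + x)) - ln (cosh a) - x * tanh a"
      unfolding lnk T by (simp add: x_def algebra_simps)
    also have "\<dots> \<le> x^2 * (3 - (tanh a)^2) / 6" by (rule lncosh_bound)
    also have "\<dots> = l^2 * (1 + 2*q*(1-q)) / 12"
      unfolding T x_def by (simp add: power2_eq_square field_simps)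
    finally show ?thesis .
  qed
qed

lemma exp_quad_neg:
  fixes z :: real
  assumes "z \<le> 0"
  shows "exp z - 1 - z \<le> z^2 / 2"
proof -
  define f where "f = (\<lambda>t::real. t^2/2 - exp t + 1 + t)"
  define f' where "f' = (\<lambda>t::real. t - exp t + 1)"
  define f'' where "f'' = (\<lambda>t::real. 1 - exp t)"
  have D1: "(f has_real_derivative f' t) (at t)" for t
    unfolding f_def f'_def by (auto intro!: derivative_eq_intros)
  have D2: "(f' has_real_derivative f'' t) (at t)" for t
    unfolding f'_def f''_def by (auto intro!: derivative_eq_intros)
  have "f z \<ge> f 0 + f' 0 * (z - 0)"
    by (rule taylor2_lb[OF D1 D2]) (use assms in \<open>auto simp: f''_def\<close>)
  thus ?thesis by (simp add: f_def f'_def)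
qed

lemma k_nonneg:
  fixes t :: real
  assumes "t \<ge> 0"
  shows "(t - 2) * exp t + t + 2 \<ge> 0"
proof -
  define f where "f = (\<lambda>t::real. (t - 2) * exp t + t + 2)"
  define f' where "f' = (\<lambda>t::real. (t - 1) * exp t + 1)"
  define f'' where "f'' = (\<lambda>t::real. t * exp t)"
  have D1: "(f has_real_derivative f' t) (at t)" for t
    unfolding f_def f'_def by (auto intro!: derivative_eq_intros simp: algebra_simps)
  have D2: "(f' has_real_derivative f'' t) (at t)" for t
    unfolding f'_def f''_def by (auto intro!: derivative_eq_intros simp: algebra_simps)
  have "f t \<ge> f 0 + f' 0 * (t - 0)"
    by (rule taylor2_lb[OF D1 D2]) (use assms in \<open>auto simp: f''_def\<close>)
  thus ?thesis by (simp add: f_def f'_def)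
qed

lemma expq:
  fixes z Z :: real
  assumes Z: "0 < Z" and zZ: "z \<le> Z"
  shows "(exp z - 1 - z) * Z^2 \<le> (exp Z - 1 - Z) * z^2"
proof (cases "z \<le> 0")
  case True
  have "(exp z - 1 - z) * Z^2 \<le> (z^2/2) * Z^2"
    using exp_quad_neg[OF True] by (intro mult_right_mono) auto
  also have "\<dots> = (Z^2/2) * z^2" by simp
  also have "\<dots> \<le> (exp Z - 1 - Z) * z^2"
    using exp_lower_Taylor_quadratic[of Z] Z by (intro mult_right_mono) auto
  finally show ?thesis .
next
  case False
  hence z0: "z > 0" by simp
  define g where "g = (\<lambda>t::real. (exp t - 1 - t) / t^2)"
  have "g z \<le> g Z"
  proof (rule DERIV_nonneg_imp_nondecreasing[OF zZ])
    fix t assume t: "z \<le> t" "t \<le> Z"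
    hence t0: "t > 0" using z0 by simp
    have "(g has_real_derivative ((t - 2) * exp t + t + 2) / t^3) (at t)"
      unfolding g_def using t0
      by (auto intro!: derivative_eq_intros simp: field_simps power2_eq_square power3_eq_cube)
    moreover have "((t - 2) * exp t + t + 2) / t^3 \<ge> 0"
      using k_nonneg[of t] t0 by simp
    ultimately show "\<exists>y. (g has_real_derivative y) (at t) \<and> 0 \<le> y" by blast
  qed
  hence "(exp z - 1 - z) / z^2 \<le> (exp Z - 1 - Z) / Z^2" by (simp add: g_def)
  thus ?thesis using z0 Z by (simp add: field_simps)
qed

lemma exp_quad_major:
  fixes l d u :: real
  assumes l: "l \<ge> 0" and d: "d > 0" and u: "u \<le> d"
  shows "exp (l * u) - 1 - l * u \<le> (u / d)^2 * (exp (l * d) - 1 - l * d)"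
proof (cases "l = 0")
  case True thus ?thesis by simp
next
  case False
  hence lp: "l > 0" using l by simp
  have "(exp (l*u) - 1 - l*u) * (l*d)^2 \<le> (exp (l*d) - 1 - l*d) * (l*u)^2"
    using lp d u by (intro expq) (auto intro: mult_left_mono)
  moreover have e: "(l*u)^2 = (u/d)^2 * (l*d)^2" using d by (simp add: field_simps power2_eq_square)
  ultimately have "(exp (l*u) - 1 - l*u) * (l*d)^2 \<le> ((u/d)^2 * (exp (l*d) - 1 - l*d)) * (l*d)^2"
    by (simp only: e mult_ac)
  thus ?thesis by (rule mult_right_le_imp_le) (use lp d in simp)
qed



lemma (in prob_space) bounded_integrable:
  fixes f :: "'a \<Rightarrow> real"
  assumes "f \<in> borel_measurable M" "\<And>\<omega>. \<omega> \<in> space M \<Longrightarrow> \<bar>f \<omega>\<bar> \<le> B"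
  shows "integrable M f"
  using assms by (intro integrable_const_bound[where B=B]) auto

lemma (in prob_space) exp_poly2:
  fixes Y :: "'a \<Rightarrow> real"
  assumes "integrable M Y" "integrable M (\<lambda>\<omega>. Y \<omega>^2)"
  shows "expectation (\<lambda>\<omega>. c0 + c1 * Y \<omega> + c2 * Y \<omega>^2) = c0 + c1 * expectation Y + c2 * expectation (\<lambda>\<omega>. Y \<omega>^2)"
  using assms by (simp add: prob_space)

lemma (in prob_space) mgf_pos:
  fixes Y :: "'a \<Rightarrow> real" and l :: real
  assumes Ym: "Y \<in> borel_measurable M" and Yb: "\<And>\<omega>. \<omega> \<in> space M \<Longrightarrow> Y \<omega> \<in> {0..1}" and l: "l \<ge> 0"
  shows "expectation (\<lambda>\<omega>. exp (l * (Y \<omega> - expectation Y)))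
           \<le> exp (l^2 * (1 + 2 * expectation (\<lambda>\<omega>. (Y \<omega> - expectation Y)^2)) / 12)"
proof -
  define \<mu> where "\<mu> = expectation Y"
  define M2 where "M2 = expectation (\<lambda>\<omega>. Y \<omega>^2)"
  define s2 where "s2 = expectation (\<lambda>\<omega>. (Y \<omega> - \<mu>)^2)"
  have intY: "integrable M Y" using Ym Yb by (intro bounded_integrable[where B=1]) auto
  have intY2: "integrable M (\<lambda>\<omega>. Y \<omega>^2)"
    using Ym Yb by (intro bounded_integrable[where B=1]) (auto simp: abs_square_le_1)
  have mu0: "\<mu> \<ge> 0" unfolding \<mu>_def using Yb by (intro integral_nonneg_AE AE_I2) auto
  have "\<mu> \<le> expectation (\<lambda>\<omega>. 1)" unfolding \<mu>_def using Yb intY by (intro integral_mono) auto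
  hence mu1: "\<mu> \<le> 1" by (simp add: prob_space)
  have s2eq: "s2 = M2 - \<mu>^2"
  proof -
    have "s2 = expectation (\<lambda>\<omega>. \<mu>^2 + (-2*\<mu>) * Y \<omega> + 1 * Y \<omega>^2)"
      unfolding s2_def by (rule Bochner_Integration.integral_cong) (auto simp: power2_eq_square algebra_simps)
    also have "\<dots> = \<mu>^2 + (-2*\<mu>) * \<mu> + M2" by (subst exp_poly2[OF intY intY2]) (simp add: \<mu>_def M2_def)
    finally show ?thesis by (simp add: power2_eq_square)
  qed
  have s20: "s2 \<ge> 0" unfolding s2_def by (intro integral_nonneg_AE AE_I2) auto
  have "M2 \<le> \<mu>" unfolding M2_def \<mu>_def using Yb intY intY2
    by (intro integral_mono) (auto simp: power2_eq_square mult_le_cancel_right1 intro: mult_left_le)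
  hence s2le: "s2 \<le> \<mu> * (1 - \<mu>)" unfolding s2eq by (simp add: power2_eq_square algebra_simps)
  show ?thesis
  proof (cases "\<mu> = 1")
    case True
    have "expectation (\<lambda>\<omega>. exp (l * (Y \<omega> - \<mu>))) \<le> expectation (\<lambda>\<omega>. 1)"
    proof (intro integral_mono)
      show "integrable M (\<lambda>\<omega>. exp (l * (Y \<omega> - \<mu>)))"
        using Ym Yb True l by (intro bounded_integrable[where B=1]) (auto simp: mult_nonneg_nonpos)
    qed (use Yb True l in \<open>auto simp: mult_nonneg_nonpos\<close>)
    also have "\<dots> = 1" by (simp add: prob_space)
    also have "1 \<le> exp (l^2 * (1 + 2 * s2) / 12)" using s20 by simp
    finally show ?thesis by (simp add: \<mu>_def s2_def)
  next
    case False
    hence mu1': "\<mu> < 1" using mu1 by simp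
    define a where "a = \<mu> - s2 / (1 - \<mu>)"
    define d where "d = 1 - a"
    define q where "q = (\<mu> - a) / d"
    have a0: "a \<ge> 0"
    proof -
      have "s2 / (1 - \<mu>) \<le> \<mu>" using s2le mu1' by (simp add: divide_le_eq mult.commute)
      thus ?thesis by (simp add: a_def)
    qed
    have amu: "a \<le> \<mu>" using s20 mu1' by (simp add: a_def)
    have d0: "d > 0" using amu mu1' by (simp add: d_def)
    have d1: "d \<le> 1" using a0 by (simp add: d_def)
    have q0: "q \<ge> 0" using amu d0 by (simp add: q_def)
    have q1: "q \<le> 1" using mu1 d0 by (simp add: q_def d_def)
    have qd: "q * d = \<mu> - a" using d0 by (simp add: q_def)
    have s2a: "s2 = (\<mu> - a) * (1 - \<mu>)" using mu1' by (simp add: a_def)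
    have s2q: "s2 = q * (1 - q) * d^2"
    proof -
      have "(1 - q) * d = 1 - \<mu>" using qd by (simp add: d_def algebra_simps)
      hence "q * (1 - q) * d^2 = (q * d) * ((1 - q) * d)" by (simp add: power2_eq_square)
      also have "\<dots> = (\<mu> - a) * (1 - \<mu>)" using qd \<open>(1 - q) * d = 1 - \<mu>\<close> by simp
      finally show ?thesis using s2a by simp
    qed
    define C where "C = (exp (l * d) - 1 - l * d) / d^2"
    define e where "e = exp (l * (a - \<mu>))"
    have pw: "exp (l * (Y \<omega> - \<mu>)) \<le> e * (1 + l * (Y \<omega> - a) + C * (Y \<omega> - a)^2)" if "\<omega> \<in> space M" for \<omega>
    proof -
      have "Y \<omega> - a \<le> d" using Yb[OF that] by (simp add: d_def)
      from exp_quad_major[OF l d0 this]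
      have "exp (l * (Y \<omega> - a)) \<le> 1 + l * (Y \<omega> - a) + C * (Y \<omega> - a)^2"
        by (simp add: C_def power_divide field_simps)
      hence "e * exp (l * (Y \<omega> - a)) \<le> e * (1 + l * (Y \<omega> - a) + C * (Y \<omega> - a)^2)"
        by (intro mult_left_mono) (auto simp: e_def)
      moreover have "e * exp (l * (Y \<omega> - a)) = exp (l * (Y \<omega> - \<mu>))"
        by (simp add: e_def exp_add[symmetric] algebra_simps)
      ultimately show ?thesis by simp
    qed
    have "expectation (\<lambda>\<omega>. exp (l * (Y \<omega> - \<mu>)))
          \<le> expectation (\<lambda>\<omega>. (e - e*l*a + e*C*a^2) + (e*l - 2*e*C*a) * Y \<omega> + (e*C) * Y \<omega>^2)"
    proof (rule integral_mono)
      show "integrable M (\<lambda>\<omega>. exp (l * (Y \<omega> - \<mu>)))"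
      proof (rule bounded_integrable[where B="exp l"])
        fix \<omega> assume "\<omega> \<in> space M"
        hence "Y \<omega> - \<mu> \<le> 1" using Yb[of \<omega>] mu0 by auto
        hence "l * (Y \<omega> - \<mu>) \<le> l * 1" using l by (rule mult_left_mono)
        thus "\<bar>exp (l * (Y \<omega> - \<mu>))\<bar> \<le> exp l" by simp
      qed (use Ym in simp)
      show "integrable M (\<lambda>\<omega>. (e - e*l*a + e*C*a^2) + (e*l - 2*e*C*a) * Y \<omega> + (e*C) * Y \<omega>^2)"
        using intY intY2 by simp
      fix \<omega> assume "\<omega> \<in> space M"
      from pw[OF this] show "exp (l * (Y \<omega> - \<mu>)) \<le> (e - e*l*a + e*C*a^2) + (e*l - 2*e*C*a) * Y \<omega> + (e*C) * Y \<omega>^2"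
        by (simp add: power2_eq_square algebra_simps)
    qed
    also have "\<dots> = (e - e*l*a + e*C*a^2) + (e*l - 2*e*C*a) * \<mu> + (e*C) * M2"
      by (subst exp_poly2[OF intY intY2]) (simp add: \<mu>_def M2_def)
    also have "\<dots> = e * (1 + l * (\<mu> - a) + C * (s2 + (\<mu> - a)^2))"
      unfolding s2eq by (simp add: power2_eq_square algebra_simps)
    also have "1 + l * (\<mu> - a) + C * (s2 + (\<mu> - a)^2) = 1 - q + q * exp (l * d)"
    proof -
      have "s2 + (\<mu> - a)^2 = q * d^2" unfolding s2q qd[symmetric] by (simp add: power2_eq_square algebra_simps)
      thus ?thesis unfolding qd[symmetric] using d0 by (simp add: C_def field_simps)
    qed
    also have "e = exp (- (q * (l * d)))"
    proof -
      have "l * (a - \<mu>) = - (l * (\<mu> - a))" by (simp add: algebra_simps)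
      also have "\<dots> = - (l * (q * d))" by (simp only: qd)
      finally show ?thesis unfolding e_def by (simp add: mult_ac)
    qed
    also have "exp (- (q * (l * d))) * (1 - q + q * exp (l * d)) = exp (ln (1 - q + q * exp (l * d)) - q * (l * d))"
    proof -
      have "1 - q + q * exp (l * d) > 0"
      proof (cases "q < 1")
        case True
        have "q * exp (l * d) \<ge> 0" using q0 by simp
        thus ?thesis using True by linarith
      next
        case False
        hence "q = 1" using q1 by simp
        thus ?thesis by simp
      qed
      thus ?thesis by (simp add: exp_diff exp_minus field_simps)
    qed
    also have "\<dots> \<le> exp ((l * d)^2 * (1 + 2*q*(1-q)) / 12)"
      using bern_bound[OF q0 q1, of "l*d"] by simp
    also have "(l * d)^2 * (1 + 2*q*(1-q)) = l^2 * (d^2 + 2 * s2)"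
      unfolding s2q by (simp add: power_mult_distrib algebra_simps)
    also have "exp (l^2 * (d^2 + 2 * s2) / 12) \<le> exp (l^2 * (1 + 2 * s2) / 12)"
    proof -
      have "d^2 \<le> 1" using d0 d1 by (simp add: power_le_one)
      thus ?thesis by (simp add: mult_left_mono divide_right_mono)
    qed
    finally show ?thesis by (simp add: \<mu>_def s2_def)
  qed
qed

lemma (in prob_space) mgf:
  fixes Y :: "'a \<Rightarrow> real" and l :: real
  assumes Ym: "Y \<in> borel_measurable M" and Yb: "\<And>\<omega>. \<omega> \<in> space M \<Longrightarrow> Y \<omega> \<in> {0..1}"
  shows "expectation (\<lambda>\<omega>. exp (l * (Y \<omega> - expectation Y)))
           \<le> exp (l^2 * (1 + 2 * expectation (\<lambda>\<omega>. (Y \<omega> - expectation Y)^2)) / 12)"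
proof (cases "l \<ge> 0")
  case True thus ?thesis using mgf_pos[OF Ym Yb] by blast
next
  case False
  have intY: "integrable M Y" using Ym Yb by (intro bounded_integrable[where B=1]) auto
  have EY': "expectation (\<lambda>\<omega>. 1 - Y \<omega>) = 1 - expectation Y" using intY by (simp add: prob_space)
  have h: "expectation (\<lambda>\<omega>. exp (-l * ((1 - Y \<omega>) - expectation (\<lambda>\<omega>. 1 - Y \<omega>))))
    \<le> exp ((-l)^2 * (1 + 2 * expectation (\<lambda>\<omega>. ((1 - Y \<omega>) - expectation (\<lambda>\<omega>. 1 - Y \<omega>))^2)) / 12)"
    using False Yb by (intro mgf_pos) (auto intro: borel_measurable_diff Ym)
  have e1: "\<And>\<omega>. -l * ((1 - Y \<omega>) - (1 - expectation Y)) = l * (Y \<omega> - expectation Y)"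
    by (simp add: algebra_simps)
  have e2: "\<And>\<omega>. ((1 - Y \<omega>) - (1 - expectation Y))^2 = (Y \<omega> - expectation Y)^2"
    by (simp add: power2_eq_square algebra_simps)
  have e3: "(-l)^2 = l^2" by simp
  from h show ?thesis by (simp only: EY' e1 e2 e3)
qed

lemma (in prob_space) chernoff_real:
  fixes Z :: "'a \<Rightarrow> real"
  assumes l: "l > 0" and int: "integrable M (\<lambda>\<omega>. exp (l * Z \<omega>))"
    and B: "expectation (\<lambda>\<omega>. exp (l * Z \<omega>)) \<le> B"
  shows "prob {\<omega> \<in> space M. Z \<omega> \<ge> \<epsilon>} \<le> B / exp (l * \<epsilon>)"
proof -
  have "{\<omega> \<in> space M. Z \<omega> \<ge> \<epsilon>} = {\<omega> \<in> space M. exp (l * Z \<omega>) \<ge> exp (l * \<epsilon>)}"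
    using l by auto
  also have "prob \<dots> \<le> expectation (\<lambda>\<omega>. exp (l * Z \<omega>)) / exp (l * \<epsilon>)"
    by (rule integral_Markov_inequality_measure[OF int]) auto
  also have "\<dots> \<le> B / exp (l * \<epsilon>)" using B by (simp add: divide_right_mono)
  finally show ?thesis .
qed

lemma (in prob_space) expectation_same_distr:
  fixes X Y :: "'a \<Rightarrow> real" and g :: "real \<Rightarrow> real"
  assumes "X \<in> borel_measurable M" "Y \<in> borel_measurable M" "distr M borel X = distr M borel Y"
    and g: "g \<in> borel_measurable borel"
  shows "expectation (\<lambda>\<omega>. g (X \<omega>)) = expectation (\<lambda>\<omega>. g (Y \<omega>))"
proof -
  have "integral\<^sup>L (distr M borel X) g = expectation (\<lambda>\<omega>. g (X \<omega>))"
    by (rule integral_distr) (use assms in auto)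
  hence "expectation (\<lambda>\<omega>. g (X \<omega>)) = integral\<^sup>L (distr M borel X) g" by simp
  also have "\<dots> = integral\<^sup>L (distr M borel Y) g" using assms by simp
  also have "\<dots> = expectation (\<lambda>\<omega>. g (Y \<omega>))"
    by (rule integral_distr) (use assms in auto)
  finally show ?thesis .
qed

lemma (in prob_space) mean_tail:
  fixes X :: "nat \<Rightarrow> 'a \<Rightarrow> real" and n :: nat and s \<epsilon> :: real
  assumes n: "n > 0"
    and Xm: "\<And>i. i < n \<Longrightarrow> X i \<in> borel_measurable M"
    and ind: "indep_vars (\<lambda>_. borel) X {..<n}"
    and dis: "\<And>i. i < n \<Longrightarrow> distr M borel (X i) = distr M borel (X 0)"
    and Xb: "\<And>i \<omega>. i < n \<Longrightarrow> \<omega> \<in> space M \<Longrightarrow> X i \<omega> \<in> {0..1}"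
    and s: "s^2 = 1" and eps: "\<epsilon> > 0"
  shows "prob {\<omega> \<in> space M. s * (\<Sum>i<n. (X i \<omega> - expectation (X 0))) \<ge> \<epsilon>}
          \<le> exp (- 3 * \<epsilon>^2 / (real n * (1 + 2 * expectation (\<lambda>\<omega>. (X 0 \<omega> - expectation (X 0))^2))))"
proof -
  define \<mu> where "\<mu> = expectation (X 0)"
  define v where "v = 1 + 2 * expectation (\<lambda>\<omega>. (X 0 \<omega> - \<mu>)^2)"
  have v1: "v \<ge> 1" unfolding v_def by (simp add: integral_nonneg_AE)
  define l where "l = 6 * \<epsilon> / (real n * v)"
  have l: "l > 0" using eps n v1 by (simp add: l_def)
  have X0m: "X 0 \<in> borel_measurable M" using Xm n by simp
  have EXi: "expectation (X i) = \<mu>" if "i < n" for i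
    using expectation_same_distr[OF Xm[OF that] X0m dis[OF that], of "\<lambda>x. x"] by (simp add: \<mu>_def)
  have VXi: "expectation (\<lambda>\<omega>. (X i \<omega> - \<mu>)^2) = expectation (\<lambda>\<omega>. (X 0 \<omega> - \<mu>)^2)" if "i < n" for i
    using expectation_same_distr[OF Xm[OF that] X0m dis[OF that], of "\<lambda>x. (x - \<mu>)^2"] by simp
  define F where "F = (\<lambda>i \<omega>. exp (l * s * (X i \<omega> - \<mu>)))"
  have Fm: "F i \<in> borel_measurable M" if "i < n" for i unfolding F_def using Xm[OF that] by measurable
  have Fb: "\<bar>F i \<omega>\<bar> \<le> exp (l)" if "i < n" "\<omega> \<in> space M" for i \<omega>
  proof -
    have "\<bar>s\<bar> = 1" using s by (metis abs_power2 one_power2 power2_eq_1_iff abs_1 abs_neg_one)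
    have mu01: "\<mu> \<in> {0..1}"
    proof -
      have "\<mu> \<ge> 0" unfolding \<mu>_def using Xb n by (intro integral_nonneg_AE AE_I2) auto
      moreover have "\<mu> \<le> expectation (\<lambda>\<omega>. 1)" unfolding \<mu>_def using Xb n X0m
        by (intro integral_mono bounded_integrable[where B=1]) auto
      ultimately show ?thesis by (simp add: prob_space)
    qed
    have "\<bar>X i \<omega> - \<mu>\<bar> \<le> 1" using Xb[OF that] mu01 by auto
    hence "\<bar>s * (X i \<omega> - \<mu>)\<bar> \<le> 1" using \<open>\<bar>s\<bar> = 1\<close> by (simp add: abs_mult)
    hence "s * (X i \<omega> - \<mu>) \<le> 1" by simp
    hence "l * (s * (X i \<omega> - \<mu>)) \<le> l * 1" using l by (intro mult_left_mono) auto
    thus ?thesis by (simp add: F_def mult.assoc)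
  qed
  have Fint: "integrable M (F i)" if "i < n" for i
    using Fm[OF that] Fb[OF that] by (intro bounded_integrable) auto
  have indF: "indep_vars (\<lambda>_. borel) F {..<n}"
    unfolding F_def by (rule indep_vars_compose2[OF ind]) measurable
  have prodeq: "(\<Prod>i<n. F i \<omega>) = exp (l * (s * (\<Sum>i<n. (X i \<omega> - \<mu>))))" for \<omega>
    by (simp add: F_def exp_sum[symmetric] sum_distrib_left mult.assoc)
  have intP: "integrable M (\<lambda>\<omega>. \<Prod>i<n. F i \<omega>)"
    using indF Fint by (intro indep_vars_integrable) auto
  have EP: "expectation (\<lambda>\<omega>. \<Prod>i<n. F i \<omega>) = (\<Prod>i<n. expectation (F i))"
    using indF Fint by (intro indep_vars_lebesgue_integral) auto
  have EF: "expectation (F i) \<le> exp (l^2 * v / 12)" if "i < n" for i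
  proof -
    have "expectation (F i) = expectation (\<lambda>\<omega>. exp ((l * s) * (X i \<omega> - expectation (X i))))"
      unfolding F_def EXi[OF that] by simp
    also have "\<dots> \<le> exp ((l * s)^2 * (1 + 2 * expectation (\<lambda>\<omega>. (X i \<omega> - expectation (X i))^2)) / 12)"
      by (rule mgf) (use Xm Xb that in auto)
    also have "(l * s)^2 * (1 + 2 * expectation (\<lambda>\<omega>. (X i \<omega> - expectation (X i))^2)) = l^2 * v"
      unfolding EXi[OF that] VXi[OF that] v_def using s by (simp add: power_mult_distrib)
    finally show ?thesis .
  qed
  have "(\<Prod>i<n. expectation (F i)) \<le> (\<Prod>i<n. exp (l^2 * v / 12))"
  proof (rule prod_mono)
    fix i assume "i \<in> {..<n}"
    hence "i < n" by simp
    moreover have "expectation (F i) \<ge> 0" unfolding F_def by (intro integral_nonneg_AE AE_I2) auto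
    ultimately show "0 \<le> expectation (F i) \<and> expectation (F i) \<le> exp (l^2 * v / 12)" using EF by auto
  qed
  also have "\<dots> = exp (real n * (l^2 * v / 12))" by (simp add: exp_of_nat_mult[symmetric])
  finally have EB: "expectation (\<lambda>\<omega>. \<Prod>i<n. F i \<omega>) \<le> exp (real n * (l^2 * v / 12))" using EP by simp
  have "prob {\<omega> \<in> space M. s * (\<Sum>i<n. (X i \<omega> - \<mu>)) \<ge> \<epsilon>} \<le> exp (real n * (l^2 * v / 12)) / exp (l * \<epsilon>)"
    by (rule chernoff_real[OF l]) (use intP EB in \<open>simp_all add: prodeq\<close>)
  also have "exp (real n * (l^2 * v / 12)) / exp (l * \<epsilon>) = exp (- 3 * \<epsilon>^2 / (real n * v))"
  proof -
    have "real n * (l^2 * v / 12) - l * \<epsilon> = - 3 * \<epsilon>^2 / (real n * v)"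
      unfolding l_def using n v1 by (simp add: field_simps power2_eq_square)
    thus ?thesis by (simp add: exp_diff[symmetric])
  qed
  finally show ?thesis by (simp add: \<mu>_def v_def)
qed



lemma exists_perm_pair:
  fixes i j i' j' :: nat and N :: "nat set"
  assumes "i \<in> N" "j \<in> N" "i' \<in> N" "j' \<in> N" "i \<noteq> j" "i' \<noteq> j'"
  shows "\<exists>\<tau>. \<tau> permutes N \<and> \<tau> i = i' \<and> \<tau> j = j'"
proof -
  define s1 where "s1 = Transposition.transpose i i'"
  define j1 where "j1 = s1 j"
  define s2 where "s2 = Transposition.transpose j1 j'"
  have p1: "s1 permutes N" unfolding s1_def using assms by (intro permutes_swap_id) auto
  have j1N: "j1 \<in> N" unfolding j1_def using p1 assms by (simp add: permutes_in_image)
  have p2: "s2 permutes N" unfolding s2_def using assms j1N by (intro permutes_swap_id) auto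
  have j1i': "j1 \<noteq> i'"
  proof
    assume "j1 = i'"
    hence "s1 j = s1 i" by (simp add: j1_def s1_def)
    hence "s1 (s1 j) = s1 (s1 i)" by simp
    hence "j = i" by (simp add: s1_def)
    thus False using assms by simp
  qed
  have "(s2 \<circ> s1) i = i'"
    using j1i' assms by (simp add: s1_def s2_def)
  moreover have "(s2 \<circ> s1) j = j'"
    by (simp add: j1_def[symmetric] s2_def)
  moreover have "(s2 \<circ> s1) permutes N" using p1 p2 by (rule permutes_compose)
  ultimately show ?thesis by blast
qed

lemma sum_offdiag_const:
  fixes c :: real
  shows "(\<Sum>a<n. \<Sum>b<n. if a = b then 0 else c) = c * real n * (real n - 1)"
proof -
  have "(\<Sum>b<n. if a = b then 0 else c) = c * (real n - 1)" if "a < n" for a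
  proof -
    have "(\<Sum>b<n. if a = b then 0 else c) = (\<Sum>b<n. c - (if a = b then c else 0))"
      by (intro sum.cong) auto
    also have "\<dots> = real n * c - c" using that by (simp add: sum_subtractf)
    finally show ?thesis by (simp add: algebra_simps)
  qed
  hence "(\<Sum>a<n. \<Sum>b<n. if a = b then 0 else c) = (\<Sum>a<n. c * (real n - 1))"
    by (intro sum.cong) auto
  thus ?thesis by simp
qed

lemma sum_perm_pair:
  fixes f :: "nat \<Rightarrow> nat \<Rightarrow> real"
  assumes ij: "i < n" "j < n" "i \<noteq> j"
  shows "(\<Sum>\<pi>\<in>{\<pi>. \<pi> permutes {..<n}}. f (\<pi> i) (\<pi> j)) * (real n * (real n - 1))
         = real (card {\<pi>. \<pi> permutes {..<n}}) * (\<Sum>a<n. \<Sum>b<n. if a = b then 0 else f a b)"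
proof -
  define P where "P = {\<pi>. \<pi> permutes {..<n}}"
  define G where "G = (\<lambda>a b. \<Sum>\<pi>\<in>P. f (\<pi> a) (\<pi> b))"
  have Gc: "G a b = G i j" if ab: "a < n" "b < n" "a \<noteq> b" for a b
  proof -
    obtain \<tau> where \<tau>: "\<tau> permutes {..<n}" "\<tau> i = a" "\<tau> j = b"
      using exists_perm_pair[of i "{..<n}" j a b] ij ab by auto
    have "G i j = (\<Sum>\<pi>\<in>P. f ((\<pi> \<circ> \<tau>) i) ((\<pi> \<circ> \<tau>) j))"
      unfolding G_def P_def by (rule sum_permutations_compose_right[OF \<tau>(1)])
    also have "\<dots> = G a b" using \<tau> by (simp add: G_def)
    finally show ?thesis by simp
  qed
  have "(\<Sum>a<n. \<Sum>b<n. if a = b then 0 else G a b) = (\<Sum>a<n. \<Sum>b<n. if a = b then 0 else G i j)"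
    using Gc by (intro sum.cong) auto
  also have "\<dots> = G i j * real n * (real n - 1)" by (rule sum_offdiag_const)
  finally have L: "(\<Sum>a<n. \<Sum>b<n. if a = b then 0 else G a b) = G i j * real n * (real n - 1)" .
  have "(\<Sum>a<n. \<Sum>b<n. if a = b then 0 else G a b)
        = (\<Sum>\<pi>\<in>P. \<Sum>a<n. \<Sum>b<n. if \<pi> a = \<pi> b then 0 else f (\<pi> a) (\<pi> b))"
  proof -
    have "(\<Sum>a<n. \<Sum>b<n. if a = b then 0 else G a b) = (\<Sum>a<n. \<Sum>b<n. \<Sum>\<pi>\<in>P. if \<pi> a = \<pi> b then 0 else f (\<pi> a) (\<pi> b))"
    proof (intro sum.cong refl)
      fix a b assume "a \<in> {..<n}" "b \<in> {..<n}"
      have "(if a = b then 0 else G a b) = (\<Sum>\<pi>\<in>P. if a = b then 0 else f (\<pi> a) (\<pi> b))"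
        by (simp add: G_def)
      also have "\<dots> = (\<Sum>\<pi>\<in>P. if \<pi> a = \<pi> b then 0 else f (\<pi> a) (\<pi> b))"
      proof (intro sum.cong refl)
        fix \<pi> assume "\<pi> \<in> P"
        hence "inj \<pi>" by (simp add: P_def permutes_inj)
        hence "(\<pi> a = \<pi> b) = (a = b)" by (simp add: inj_eq)
        thus "(if a = b then 0 else f (\<pi> a) (\<pi> b)) = (if \<pi> a = \<pi> b then 0 else f (\<pi> a) (\<pi> b))" by simp
      qed
      finally show "(if a = b then 0 else G a b) = (\<Sum>\<pi>\<in>P. if \<pi> a = \<pi> b then 0 else f (\<pi> a) (\<pi> b))" .
    qed
    also have "\<dots> = (\<Sum>a<n. \<Sum>\<pi>\<in>P. \<Sum>b<n. if \<pi> a = \<pi> b then 0 else f (\<pi> a) (\<pi> b))"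
      by (intro sum.cong refl) (rule sum.swap)
    also have "\<dots> = (\<Sum>\<pi>\<in>P. \<Sum>a<n. \<Sum>b<n. if \<pi> a = \<pi> b then 0 else f (\<pi> a) (\<pi> b))"
      by (rule sum.swap)
    finally show ?thesis .
  qed
  also have "\<dots> = (\<Sum>\<pi>\<in>P. \<Sum>a<n. \<Sum>b<n. if a = b then 0 else f a b)"
  proof (rule sum.cong[OF refl])
    fix \<pi> assume "\<pi> \<in> P"
    hence bij: "bij_betw \<pi> {..<n} {..<n}" by (simp add: P_def permutes_imp_bij)
    have inner: "(\<Sum>b<n. if \<pi> a = \<pi> b then 0 else f (\<pi> a) (\<pi> b)) = (\<Sum>b<n. if \<pi> a = b then 0 else f (\<pi> a) b)" for a
      using sum.reindex_bij_betw[OF bij, of "\<lambda>b. if \<pi> a = b then 0 else f (\<pi> a) b"] by simp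
    have "(\<Sum>a<n. \<Sum>b<n. if \<pi> a = \<pi> b then 0 else f (\<pi> a) (\<pi> b)) = (\<Sum>a<n. \<Sum>b<n. if \<pi> a = b then 0 else f (\<pi> a) b)"
      using inner by simp
    also have "\<dots> = (\<Sum>a<n. \<Sum>b<n. if a = b then 0 else f a b)"
      using sum.reindex_bij_betw[OF bij, of "\<lambda>a. \<Sum>b<n. if a = b then 0 else f a b"] by simp
    finally show "(\<Sum>a<n. \<Sum>b<n. if \<pi> a = \<pi> b then 0 else f (\<pi> a) (\<pi> b)) = (\<Sum>a<n. \<Sum>b<n. if a = b then 0 else f a b)" .
  qed
  also have "\<dots> = real (card P) * (\<Sum>a<n. \<Sum>b<n. if a = b then 0 else f a b)" by simp
  finally show ?thesis using L by (simp add: G_def P_def mult.assoc)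
qed



lemma sample_var_pairs:
  fixes x :: "nat \<Rightarrow> real"
  assumes n: "n \<ge> 2"
  shows "sample_var n x = (\<Sum>a<n. \<Sum>b<n. if a = b then 0 else (x a - x b)^2/2) / (real n * (real n - 1))"
proof -
  define S1 where "S1 = (\<Sum>a<n. x a)"
  define S2 where "S2 = (\<Sum>a<n. x a ^ 2)"
  have inner: "(\<Sum>b<n. (x a - x b)^2/2) = (real n * x a^2 - 2 * x a * S1 + S2) / 2" for a
  proof -
    have "(\<Sum>b<n. (x a - x b)^2/2) = (\<Sum>b<n. x a^2/2 - x a * x b + x b^2/2)"
      by (intro sum.cong) (auto simp: power2_diff field_simps)
    also have "\<dots> = real n * x a^2/2 - x a * S1 + S2/2"
      by (simp add: sum.distrib sum_subtractf sum_distrib_left[symmetric] sum_divide_distrib[symmetric] S1_def S2_def)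
    finally show ?thesis by (simp add: field_simps)
  qed
  have "(\<Sum>a<n. \<Sum>b<n. if a = b then 0 else (x a - x b)^2/2) = (\<Sum>a<n. \<Sum>b<n. (x a - x b)^2/2)"
    by (intro sum.cong) auto
  also have "\<dots> = (\<Sum>a<n. (real n * x a^2 - 2 * x a * S1 + S2) / 2)" by (rule sum.cong[OF refl]) (rule inner)
  also have "\<dots> = real n * S2 - S1^2"
    by (simp add: sum_divide_distrib[symmetric] sum.distrib sum_subtractf sum_distrib_left[symmetric]
        sum_distrib_right[symmetric] S1_def S2_def power2_eq_square field_simps)
  finally have L: "(\<Sum>a<n. \<Sum>b<n. if a = b then 0 else (x a - x b)^2/2) = real n * S2 - S1^2" .
  define c where "c = S1 / real n"
  have "(\<Sum>a<n. (x a - sample_mean n x)^2) = (\<Sum>a<n. x a^2 - 2 * c * x a + c^2)"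
    by (intro sum.cong) (auto simp: sample_mean_def S1_def c_def power2_diff)
  also have "\<dots> = S2 - 2 * c * S1 + real n * c^2"
    by (simp add: sum.distrib sum_subtractf sum_distrib_left[symmetric] S1_def S2_def)
  also have "\<dots> = S2 - S1^2 / real n"
    unfolding c_def using n by (simp add: field_simps power2_eq_square)
  finally have R: "(\<Sum>a<n. (x a - sample_mean n x)^2) = S2 - S1^2 / real n" .
  show ?thesis unfolding sample_var_def R L using n by (simp add: field_simps)
qed



lemma (in prob_space) hoeffding_real:
  fixes Y :: "'a \<Rightarrow> real"
  assumes Ym: "Y \<in> borel_measurable M" and Yb: "\<And>\<omega>. \<omega> \<in> space M \<Longrightarrow> Y \<omega> \<in> {a..b}" and l: "l > 0"
  shows "expectation (\<lambda>\<omega>. exp (l * (Y \<omega> - expectation Y))) \<le> exp (l^2 * (b - a)^2 / 8)"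
proof -
  interpret H: interval_bounded_random_variable M Y a b
    by unfold_locales (use Ym Yb in \<open>auto intro!: AE_I2\<close>)
  have h: "(\<integral>\<^sup>+x. ennreal (exp (l * (Y x - expectation Y))) \<partial>M) \<le> ennreal (exp (l^2 * (b - a)^2 / 8))"
    by (rule H.Hoeffdings_lemma_nn_integral) (rule l)
  have int: "integrable M (\<lambda>x. exp (l * (Y x - expectation Y)))"
  proof (rule bounded_integrable[where B="exp (l * (b - a))"])
    fix \<omega> assume w: "\<omega> \<in> space M"
    have "expectation Y \<ge> a"
    proof -
      have "expectation (\<lambda>_. a) \<le> expectation Y" using Yb H.integrable by (intro integral_mono) auto
      thus ?thesis by (simp add: prob_space)
    qed
    hence "Y \<omega> - expectation Y \<le> b - a" using Yb[OF w] by auto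
    hence "l * (Y \<omega> - expectation Y) \<le> l * (b - a)" using l by (intro mult_left_mono) auto
    thus "\<bar>exp (l * (Y \<omega> - expectation Y))\<bar> \<le> exp (l * (b - a))" by simp
  qed (use Ym in measurable)
  have "(\<integral>\<^sup>+x. ennreal (exp (l * (Y x - expectation Y))) \<partial>M) = ennreal (expectation (\<lambda>x. exp (l * (Y x - expectation Y))))"
    by (rule nn_integral_eq_integral[OF int]) auto
  with h show ?thesis by (simp add: ennreal_le_iff2)
qed

lemma (in prob_space) pair_moment:
  fixes X :: "nat \<Rightarrow> 'a \<Rightarrow> real" and n i j :: nat
  assumes Xm: "\<And>i. i < n \<Longrightarrow> X i \<in> borel_measurable M"
    and ind: "indep_vars (\<lambda>_. borel) X {..<n}"
    and dis: "\<And>i. i < n \<Longrightarrow> distr M borel (X i) = distr M borel (X 0)"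
    and Xb: "\<And>i \<omega>. i < n \<Longrightarrow> \<omega> \<in> space M \<Longrightarrow> X i \<omega> \<in> {0..1}"
    and ij: "i < n" "j < n" "i \<noteq> j"
  shows "expectation (\<lambda>\<omega>. (X i \<omega> - X j \<omega>)^2 / 2) = expectation (\<lambda>\<omega>. (X 0 \<omega> - expectation (X 0))^2)"
proof -
  have n0: "0 < n" using ij by simp
  have X0m: "X 0 \<in> borel_measurable M" using Xm n0 by simp
  have int: "integrable M (X k)" if "k < n" for k
    using Xm[OF that] Xb[OF that] by (intro bounded_integrable[where B=1]) auto
  have int2: "integrable M (\<lambda>\<omega>. X k \<omega>^2)" if "k < n" for k
    using Xm[OF that] Xb[OF that] by (intro bounded_integrable[where B=1]) (auto simp: abs_square_le_1)
  define \<mu> where "\<mu> = expectation (X 0)"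
  define M2 where "M2 = expectation (\<lambda>\<omega>. X 0 \<omega>^2)"
  have E1: "expectation (X k) = \<mu>" if "k < n" for k
    using expectation_same_distr[OF Xm[OF that] X0m dis[OF that], of "\<lambda>x. x"] by (simp add: \<mu>_def)
  have E2: "expectation (\<lambda>\<omega>. X k \<omega>^2) = M2" if "k < n" for k
    using expectation_same_distr[OF Xm[OF that] X0m dis[OF that], of "\<lambda>x. x^2"] by (simp add: M2_def)
  have indij: "indep_vars (\<lambda>_. borel) X {i, j}"
    using ij by (intro indep_vars_subset[OF ind]) auto
  have "expectation (\<lambda>\<omega>. \<Prod>k\<in>{i,j}. X k \<omega>) = (\<Prod>k\<in>{i,j}. expectation (X k))"
    using indij int ij by (intro indep_vars_lebesgue_integral) auto
  hence Eij: "expectation (\<lambda>\<omega>. X i \<omega> * X j \<omega>) = \<mu> * \<mu>" using ij E1 by simp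
  have intij: "integrable M (\<lambda>\<omega>. X i \<omega> * X j \<omega>)"
    using Xm ij Xb by (intro bounded_integrable[where B=1]) (auto simp: abs_mult intro: mult_le_one)
  have "expectation (\<lambda>\<omega>. (X i \<omega> - X j \<omega>)^2 / 2)
        = expectation (\<lambda>\<omega>. (X i \<omega>^2 / 2 - X i \<omega> * X j \<omega>) + X j \<omega>^2 / 2)"
    by (rule Bochner_Integration.integral_cong) (auto simp: power2_diff field_simps)
  also have "\<dots> = M2 / 2 - \<mu> * \<mu> + M2 / 2"
    using int2 ij intij E2 Eij by simp
  finally have L: "expectation (\<lambda>\<omega>. (X i \<omega> - X j \<omega>)^2 / 2) = M2 - \<mu> * \<mu>" by simp
  have "expectation (\<lambda>\<omega>. (X 0 \<omega> - \<mu>)^2) = expectation (\<lambda>\<omega>. (X 0 \<omega>^2 - (2 * \<mu>) * X 0 \<omega>) + \<mu>^2)"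
    by (rule Bochner_Integration.integral_cong) (auto simp: power2_diff field_simps)
  also have "\<dots> = M2 - (2 * \<mu>) * \<mu> + \<mu>^2"
    using int2[OF n0] int[OF n0] by (simp add: M2_def \<mu>_def prob_space)
  finally have R: "expectation (\<lambda>\<omega>. (X 0 \<omega> - \<mu>)^2) = M2 - \<mu> * \<mu>" by (simp add: power2_eq_square)
  show ?thesis using L R by (simp add: \<mu>_def)
qed

lemma (in prob_space) sample_meas:
  fixes X :: "nat \<Rightarrow> 'a \<Rightarrow> real"
  assumes Xm: "\<And>i. i < n \<Longrightarrow> X i \<in> borel_measurable M"
  shows "(\<lambda>\<omega>. sample_mean n (\<lambda>i. X i \<omega>)) \<in> borel_measurable M"
    and "(\<lambda>\<omega>. sample_var n (\<lambda>i. X i \<omega>)) \<in> borel_measurable M"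
proof -
  have s: "(\<lambda>\<omega>. \<Sum>i<n. X i \<omega>) \<in> borel_measurable M"
    using Xm by (intro borel_measurable_sum) auto
  show m: "(\<lambda>\<omega>. sample_mean n (\<lambda>i. X i \<omega>)) \<in> borel_measurable M"
    unfolding sample_mean_def using s by measurable
  have "(\<lambda>\<omega>. \<Sum>i<n. (X i \<omega> - sample_mean n (\<lambda>i. X i \<omega>))^2) \<in> borel_measurable M"
    using Xm m by (intro borel_measurable_sum) auto
  thus "(\<lambda>\<omega>. sample_var n (\<lambda>i. X i \<omega>)) \<in> borel_measurable M"
    unfolding sample_var_def by measurable
qed

lemma (in prob_space) perm_mgf:
  fixes X :: "nat \<Rightarrow> 'a \<Rightarrow> real" and n :: nat and \<pi> :: "nat \<Rightarrow> nat" and t s2 :: real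
  assumes n: "n \<ge> 2"
    and Xm: "\<And>i. i < n \<Longrightarrow> X i \<in> borel_measurable M"
    and ind: "indep_vars (\<lambda>_. borel) X {..<n}"
    and dis: "\<And>i. i < n \<Longrightarrow> distr M borel (X i) = distr M borel (X 0)"
    and Xb: "\<And>i \<omega>. i < n \<Longrightarrow> \<omega> \<in> space M \<Longrightarrow> X i \<omega> \<in> {0..1}"
    and \<pi>: "\<pi> permutes {..<n}" and t: "t > 0"
    and s2: "s2 = expectation (\<lambda>\<omega>. (X 0 \<omega> - expectation (X 0))^2)"
  shows "expectation (\<lambda>\<omega>. exp (t * (s2 - (\<Sum>k<n div 2. (X (\<pi> (2*k)) \<omega> - X (\<pi> (2*k+1)) \<omega>)^2/2) / real (n div 2))))
           \<le> exp (t^2 / (32 * real (n div 2)))"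
proof -
  define m where "m = n div 2"
  have m1: "m \<ge> 1" using n by (simp add: m_def)
  have m0: "real m > 0" using m1 by simp
  have km: "2*k+1 < n" if "k < m" for k using that by (simp add: m_def)
  have km2: "2*k < n" if "k < m" for k using km[OF that] by simp
  have \<pi>n: "\<pi> a < n" if "a < n" for a using permutes_in_image[OF \<pi>, of a] that by simp
  have \<pi>inj: "\<pi> a = \<pi> b \<longleftrightarrow> a = b" for a b using \<pi> by (simp add: permutes_inj inj_eq)
  define Z where "Z = (\<lambda>k \<omega>. (X (\<pi> (2*k)) \<omega> - X (\<pi> (2*k+1)) \<omega>)^2 / 2)"
  define l where "l = t / real m"
  have l: "l > 0" using t m0 by (simp add: l_def)
  define Ek where "Ek = (\<lambda>k \<omega>. exp (l * (s2 - Z k \<omega>)))"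
  have Zm: "Z k \<in> borel_measurable M" if "k < m" for k
    using Xm[OF \<pi>n] km[OF that] km2[OF that] unfolding Z_def by (intro borel_measurable_divide borel_measurable_power borel_measurable_diff) auto
  have Zb: "Z k \<omega> \<in> {0..1/2}" if "k < m" "\<omega> \<in> space M" for k \<omega>
  proof -
    have "X (\<pi> (2*k)) \<omega> \<in> {0..1}" "X (\<pi> (2*k+1)) \<omega> \<in> {0..1}"
      using Xb \<pi>n km[OF that(1)] km2[OF that(1)] that(2) by auto
    hence "\<bar>X (\<pi> (2*k)) \<omega> - X (\<pi> (2*k+1)) \<omega>\<bar> \<le> 1" by auto
    hence "(X (\<pi> (2*k)) \<omega> - X (\<pi> (2*k+1)) \<omega>)^2 \<le> 1" by (simp add: abs_square_le_1)
    thus ?thesis by (simp add: Z_def)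
  qed
  have EZ: "expectation (Z k) = s2" if "k < m" for k
    unfolding Z_def s2 using km[OF that] km2[OF that] \<pi>n \<pi>inj
    by (intro pair_moment[OF Xm ind dis Xb]) auto
  define K where "K = (\<lambda>k. {\<pi> (2*k), \<pi> (2*k+1)})"
  have KN: "K k \<subseteq> {..<n}" if "k \<in> {..<m}" for k using km km2 that \<pi>n by (auto simp: K_def)
  have Kdisj: "disjoint_family_on K {..<m}"
    unfolding disjoint_family_on_def K_def using \<pi>inj by auto
  have ind1: "indep_vars (\<lambda>k. PiM (K k) (\<lambda>_. borel)) (\<lambda>k \<omega>. restrict (\<lambda>i. X i \<omega>) (K k)) {..<m}"
    by (rule indep_vars_restrict[OF ind KN Kdisj])
  define Y where "Y = (\<lambda>k (f :: nat \<Rightarrow> real). exp (l * (s2 - (f (\<pi> (2*k)) - f (\<pi> (2*k+1)))^2 / 2)))"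
  have Ym: "Y k \<in> measurable (PiM (K k) (\<lambda>_. borel)) borel" for k
  proof -
    have [measurable]: "(\<lambda>f. f (\<pi> (2*k))) \<in> measurable (PiM (K k) (\<lambda>_. borel)) borel"
      by (rule measurable_component_singleton) (simp add: K_def)
    have [measurable]: "(\<lambda>f. f (\<pi> (2*k+1))) \<in> measurable (PiM (K k) (\<lambda>_. borel)) borel"
      by (rule measurable_component_singleton) (simp add: K_def)
    show ?thesis unfolding Y_def by measurable
  qed
  have ind2: "indep_vars (\<lambda>_. borel) (\<lambda>k \<omega>. Y k (restrict (\<lambda>i. X i \<omega>) (K k))) {..<m}"
    by (rule indep_vars_compose2[OF ind1 Ym])
  have indE: "indep_vars (\<lambda>_. borel) Ek {..<m}"
  proof -
    have "(\<lambda>\<omega>. Y k (restrict (\<lambda>i. X i \<omega>) (K k))) = Ek k" for k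
      by (rule ext) (simp add: Y_def Ek_def Z_def K_def)
    thus ?thesis using ind2 by simp
  qed
  have Ekm: "Ek k \<in> borel_measurable M" if "k < m" for k
    unfolding Ek_def using Zm[OF that] by measurable
  have s20: "s2 \<ge> 0" unfolding s2 by (intro integral_nonneg_AE AE_I2) auto
  have Ekint: "integrable M (Ek k)" if "k < m" for k
  proof (rule bounded_integrable[OF Ekm[OF that], where B="exp (l * s2)"])
    fix \<omega> assume "\<omega> \<in> space M"
    hence "Z k \<omega> \<ge> 0" using Zb that by auto
    hence "l * (s2 - Z k \<omega>) \<le> l * s2" using l by (intro mult_left_mono) auto
    thus "\<bar>Ek k \<omega>\<bar> \<le> exp (l * s2)" by (simp add: Ek_def)
  qed
  have EEk: "expectation (Ek k) \<le> exp (l^2 / 32)" if "k < m" for k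
  proof -
    have Ym': "(\<lambda>\<omega>. - Z k \<omega>) \<in> borel_measurable M" using Zm[OF that] by measurable
    have "expectation (\<lambda>\<omega>. exp (l * (- Z k \<omega> - expectation (\<lambda>\<omega>. - Z k \<omega>)))) \<le> exp (l^2 * (0 - (-1/2))^2 / 8)"
      by (rule hoeffding_real[OF Ym' _ l]) (use Zb that in auto)
    moreover have "expectation (\<lambda>\<omega>. - Z k \<omega>) = - s2" using EZ[OF that] by simp
    ultimately show ?thesis by (simp add: Ek_def power2_eq_square algebra_simps)
  qed
  have prodE: "(\<Prod>k<m. Ek k \<omega>) = exp (t * (s2 - (\<Sum>k<m. Z k \<omega>) / real m))" for \<omega>
  proof -
    have "(\<Prod>k<m. Ek k \<omega>) = exp (\<Sum>k<m. l * (s2 - Z k \<omega>))" by (simp add: Ek_def exp_sum)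
    also have "(\<Sum>k<m. l * (s2 - Z k \<omega>)) = l * real m * s2 - l * (\<Sum>k<m. Z k \<omega>)"
      by (simp add: sum_subtractf sum_distrib_left[symmetric] algebra_simps)
    also have "\<dots> = t * (s2 - (\<Sum>k<m. Z k \<omega>) / real m)"
      using m0 by (simp add: l_def field_simps)
    finally show ?thesis .
  qed
  have "expectation (\<lambda>\<omega>. \<Prod>k<m. Ek k \<omega>) = (\<Prod>k<m. expectation (Ek k))"
    using indE Ekint by (intro indep_vars_lebesgue_integral) auto
  also have "\<dots> \<le> (\<Prod>k<m. exp (l^2 / 32))"
  proof (rule prod_mono)
    fix k assume "k \<in> {..<m}"
    hence k: "k < m" by simp
    have "expectation (Ek k) \<ge> 0" unfolding Ek_def by (intro integral_nonneg_AE AE_I2) auto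
    thus "0 \<le> expectation (Ek k) \<and> expectation (Ek k) \<le> exp (l^2 / 32)" using EEk[OF k] by auto
  qed
  also have "\<dots> = exp (real m * (l^2 / 32))" by (simp add: exp_of_nat_mult[symmetric])
  also have "real m * (l^2 / 32) = t^2 / (32 * real m)"
    using m0 by (simp add: l_def power2_eq_square field_simps)
  finally show ?thesis unfolding prodE by (simp add: Z_def m_def)
qed

lemma (in prob_space) var_tail:
  fixes X :: "nat \<Rightarrow> 'a \<Rightarrow> real" and n :: nat and \<epsilon> :: real
  assumes n: "n \<ge> 2"
    and Xm: "\<And>i. i < n \<Longrightarrow> X i \<in> borel_measurable M"
    and ind: "indep_vars (\<lambda>_. borel) X {..<n}"
    and dis: "\<And>i. i < n \<Longrightarrow> distr M borel (X i) = distr M borel (X 0)"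
    and Xb: "\<And>i \<omega>. i < n \<Longrightarrow> \<omega> \<in> space M \<Longrightarrow> X i \<omega> \<in> {0..1}"
    and eps: "\<epsilon> > 0"
  shows "prob {\<omega> \<in> space M. expectation (\<lambda>\<omega>. (X 0 \<omega> - expectation (X 0))^2) - sample_var n (\<lambda>i. X i \<omega>) \<ge> \<epsilon>}
           \<le> exp (- 8 * real (n div 2) * \<epsilon>^2)"
proof -
  define s2 where "s2 = expectation (\<lambda>\<omega>. (X 0 \<omega> - expectation (X 0))^2)"
  define m where "m = n div 2"
  have m1: "m \<ge> 1" using n by (simp add: m_def)
  have m0: "real m > 0" using m1 by simp
  have km: "2*k+1 < n" if "k < m" for k using that by (simp add: m_def)
  define P where "P = {\<pi>. \<pi> permutes {..<n}}"
  have finP: "finite P" unfolding P_def by (rule finite_permutations) simp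
  have cardP: "card P > 0" unfolding P_def using card_permutations[of "{..<n}" n] by simp
  hence Pne: "P \<noteq> {}" by auto
  define Z where "Z = (\<lambda>(\<pi>::nat\<Rightarrow>nat) (k::nat) \<omega>. (X (\<pi> (2*k)) \<omega> - X (\<pi> (2*k+1)) \<omega>)^2 / 2)"
  define W where "W = (\<lambda>(\<pi>::nat\<Rightarrow>nat) \<omega>. (\<Sum>k<m. Z \<pi> k \<omega>) / real m)"
  define S where "S = (\<lambda>\<omega>. sample_var n (\<lambda>i. X i \<omega>))"
  have Sm: "S \<in> borel_measurable M" unfolding S_def by (rule sample_meas(2)[OF Xm])
  have SW: "S \<omega> = (\<Sum>\<pi>\<in>P. W \<pi> \<omega>) / real (card P)" for \<omega>
  proof -
    define F where "F = (\<Sum>a<n. \<Sum>b<n. if a = b then 0 else (X a \<omega> - X b \<omega>)^2/2)"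
    have SV: "S \<omega> = F / (real n * (real n - 1))" using sample_var_pairs[OF n] by (simp add: F_def S_def)
    have nn: "real n * (real n - 1) > 0" using n by simp
    have ZP: "(\<Sum>\<pi>\<in>P. Z \<pi> k \<omega>) = real (card P) * S \<omega>" if "k < m" for k
    proof -
      have "(\<Sum>\<pi>\<in>P. Z \<pi> k \<omega>) * (real n * (real n - 1)) = real (card P) * F"
        using sum_perm_pair[of "2*k" n "2*k+1" "\<lambda>a b. (X a \<omega> - X b \<omega>)^2/2"] km[OF that]
        by (simp add: Z_def P_def F_def)
      hence "(\<Sum>\<pi>\<in>P. Z \<pi> k \<omega>) = real (card P) * F / (real n * (real n - 1))"
        using nn n by (simp add: eq_divide_eq)
      thus ?thesis unfolding SV by simp
    qed
    have "(\<Sum>\<pi>\<in>P. W \<pi> \<omega>) = (\<Sum>\<pi>\<in>P. \<Sum>k<m. Z \<pi> k \<omega>) / real m"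
      by (simp add: W_def sum_divide_distrib)
    also have "(\<Sum>\<pi>\<in>P. \<Sum>k<m. Z \<pi> k \<omega>) = (\<Sum>k<m. \<Sum>\<pi>\<in>P. Z \<pi> k \<omega>)" by (rule sum.swap)
    also have "\<dots> = (\<Sum>k<m. real (card P) * S \<omega>)" by (rule sum.cong[OF refl]) (simp add: ZP)
    also have "\<dots> / real m = real (card P) * S \<omega>" using m0 by simp
    finally show ?thesis using cardP by simp
  qed
  have Zb: "Z \<pi> k \<omega> \<in> {0..1/2}" if "\<pi> \<in> P" "k < m" "\<omega> \<in> space M" for \<pi> k \<omega>
  proof -
    have "\<pi> (2*k) < n" "\<pi> (2*k+1) < n"
      using permutes_in_image[of \<pi> "{..<n}"] that km[OF that(2)] by (auto simp: P_def)
    hence "X (\<pi> (2*k)) \<omega> \<in> {0..1}" "X (\<pi> (2*k+1)) \<omega> \<in> {0..1}" using Xb that(3) by auto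
    hence "\<bar>X (\<pi> (2*k)) \<omega> - X (\<pi> (2*k+1)) \<omega>\<bar> \<le> 1" by auto
    hence "(X (\<pi> (2*k)) \<omega> - X (\<pi> (2*k+1)) \<omega>)^2 \<le> 1" by (simp add: abs_square_le_1)
    thus ?thesis by (simp add: Z_def)
  qed
  have Wm: "W \<pi> \<in> borel_measurable M" if "\<pi> \<in> P" for \<pi>
  proof -
    have "\<pi> (2*k) < n" "\<pi> (2*k+1) < n" if "k < m" for k
      using permutes_in_image[of \<pi> "{..<n}"] \<open>\<pi> \<in> P\<close> km[OF that] by (auto simp: P_def)
    hence "Z \<pi> k \<in> borel_measurable M" if "k < m" for k
      using Xm that unfolding Z_def by (intro borel_measurable_divide borel_measurable_power borel_measurable_diff) auto
    hence "(\<lambda>\<omega>. \<Sum>k<m. Z \<pi> k \<omega>) \<in> borel_measurable M" by (intro borel_measurable_sum) auto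
    thus ?thesis unfolding W_def by measurable
  qed
  have Wb: "W \<pi> \<omega> \<ge> 0" if "\<pi> \<in> P" "\<omega> \<in> space M" for \<pi> \<omega>
    unfolding W_def using Zb[OF that(1) _ that(2)] by (intro divide_nonneg_nonneg sum_nonneg) auto
  have s20: "s2 \<ge> 0" unfolding s2_def by (intro integral_nonneg_AE AE_I2) auto
  define t where "t = 16 * real m * \<epsilon>"
  have t: "t > 0" using m0 eps by (simp add: t_def)
  define G where "G = (\<lambda>\<pi> \<omega>. exp (t * (s2 - W \<pi> \<omega>)))"
  have Gm: "G \<pi> \<in> borel_measurable M" if "\<pi> \<in> P" for \<pi> unfolding G_def using Wm[OF that] by measurable
  have Gb: "\<bar>G \<pi> \<omega>\<bar> \<le> exp (t * s2)" if "\<pi> \<in> P" "\<omega> \<in> space M" for \<pi> \<omega>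
  proof -
    have "t * (s2 - W \<pi> \<omega>) \<le> t * s2" using t Wb[OF that] by (intro mult_left_mono) auto
    thus ?thesis by (simp add: G_def)
  qed
  have Gint: "integrable M (G \<pi>)" if "\<pi> \<in> P" for \<pi>
    by (rule bounded_integrable[OF Gm[OF that]]) (use Gb that in auto)
  have EG: "expectation (G \<pi>) \<le> exp (t^2 / (32 * real m))" if "\<pi> \<in> P" for \<pi>
    unfolding G_def W_def Z_def m_def
    by (rule perm_mgf[OF n Xm ind dis Xb _ t]) (use that in \<open>auto simp: P_def s2_def\<close>)
  have jensen: "exp (t * (s2 - S \<omega>)) \<le> (\<Sum>\<pi>\<in>P. G \<pi> \<omega>) / real (card P)" for \<omega>
  proof -
    have "t * (s2 - S \<omega>) = (\<Sum>\<pi>\<in>P. (1 / real (card P)) *\<^sub>R (t * (s2 - W \<pi> \<omega>)))"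
      unfolding SW using cardP
      by (simp add: sum_subtractf sum_distrib_left[symmetric] sum_divide_distrib[symmetric] field_simps)
    hence "exp (t * (s2 - S \<omega>)) = exp (\<Sum>\<pi>\<in>P. (1 / real (card P)) *\<^sub>R (t * (s2 - W \<pi> \<omega>)))" by simp
    also have "\<dots> \<le> (\<Sum>\<pi>\<in>P. (1 / real (card P)) * exp (t * (s2 - W \<pi> \<omega>)))"
      by (rule convex_on_sum[OF finP Pne exp_convex]) (use cardP finP in auto)
    also have "\<dots> = (\<Sum>\<pi>\<in>P. G \<pi> \<omega>) / real (card P)"
      by (simp add: G_def sum_divide_distrib)
    finally show ?thesis .
  qed
  have intS: "integrable M (\<lambda>\<omega>. exp (t * (s2 - S \<omega>)))"
  proof (rule bounded_integrable[where B="exp (t * s2)"])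
    show "(\<lambda>\<omega>. exp (t * (s2 - S \<omega>))) \<in> borel_measurable M" using Sm by measurable
    fix \<omega> assume w: "\<omega> \<in> space M"
    have "(\<Sum>\<pi>\<in>P. G \<pi> \<omega>) \<le> (\<Sum>\<pi>\<in>P. exp (t * s2))"
      using w by (intro sum_mono) (metis Gb abs_le_D1)
    hence "(\<Sum>\<pi>\<in>P. G \<pi> \<omega>) / real (card P) \<le> exp (t * s2)" using cardP by (simp add: divide_le_eq mult.commute)
    hence "exp (t * (s2 - S \<omega>)) \<le> exp (t * s2)" using jensen[of \<omega>] by linarith
    thus "\<bar>exp (t * (s2 - S \<omega>))\<bar> \<le> exp (t * s2)" by (simp only: abs_of_pos[OF exp_gt_zero])
  qed
  have "expectation (\<lambda>\<omega>. exp (t * (s2 - S \<omega>))) \<le> expectation (\<lambda>\<omega>. (\<Sum>\<pi>\<in>P. G \<pi> \<omega>) / real (card P))"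
    by (rule integral_mono[OF intS]) (use Gint jensen in auto)
  also have "\<dots> = (\<Sum>\<pi>\<in>P. expectation (G \<pi>)) / real (card P)"
    using Gint by (simp add: Bochner_Integration.integral_sum)
  also have "\<dots> \<le> (\<Sum>\<pi>\<in>P. exp (t^2 / (32 * real m))) / real (card P)"
    using EG cardP by (intro divide_right_mono sum_mono) auto
  also have "\<dots> = exp (t^2 / (32 * real m))" using cardP by simp
  finally have EB: "expectation (\<lambda>\<omega>. exp (t * (s2 - S \<omega>))) \<le> exp (t^2 / (32 * real m))" .
  have "prob {\<omega> \<in> space M. s2 - S \<omega> \<ge> \<epsilon>} \<le> exp (t^2 / (32 * real m)) / exp (t * \<epsilon>)"
    by (rule chernoff_real[OF t intS EB])
  also have "exp (t^2 / (32 * real m)) / exp (t * \<epsilon>) = exp (- 8 * real m * \<epsilon>^2)"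
  proof -
    have "t^2 / (32 * real m) - t * \<epsilon> = - 8 * real m * \<epsilon>^2"
      unfolding t_def using m0 by (simp add: power2_eq_square field_simps)
    thus ?thesis by (simp add: exp_diff[symmetric])
  qed
  finally show ?thesis by (simp add: s2_def S_def m_def)
qed



lemma aux_r:
  fixes r sm sL L n :: real
  assumes r: "r > 0" "r * r = 8" and sm: "sm > 0" and n: "n > 0"
  shows "2 * (sL / (r * sm)) * L / (3 * n) = 1 / (12 * n) * (r / sm) * (L * sL)"
proof -
  have k: "2 / (3 * r) = r / 12" using r by (simp add: field_simps)
  have "2 * (sL / (r * sm)) * L / (3 * n) = (2 / (3 * r)) * (sL * L / (n * sm))"
    using r sm n by (simp add: field_simps)
  also have "\<dots> = (r / 12) * (sL * L / (n * sm))" by (simp only: k)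
  also have "\<dots> = 1 / (12 * n) * (r / sm) * (L * sL)"
    using r sm n by (simp add: field_simps)
  finally show ?thesis .
qed

lemma second_term_eq:
  fixes L :: real and n m :: nat
  assumes L: "L > 0" and m: "m > 0" and n: "n > 0"
  shows "2 * sqrt (L / (8 * real m)) * L / (3 * real n) = 1 / (12 * real n) * sqrt (8 / real m) * L powr (3/2)"
proof -
  have p: "L powr (3/2) = L * sqrt L"
  proof -
    have "L powr (3/2) = L powr (1 + 1/2)" by simp
    also have "\<dots> = L powr 1 * L powr (1/2)" by (rule powr_add)
    also have "\<dots> = L * sqrt L" using L by (simp add: powr_half_sqrt)
    finally show ?thesis .
  qed
  have e1: "sqrt (L / (8 * real m)) = sqrt L / (sqrt 8 * sqrt (real m))"
    by (simp add: real_sqrt_divide real_sqrt_mult)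
  have e2: "sqrt (8 / real m) = sqrt 8 / sqrt (real m)" by (simp add: real_sqrt_divide)
  show ?thesis unfolding p e1 e2
    by (rule aux_r) (use m n in auto)
qed

lemma bound_combine:
  fixes n :: nat and L S2 s2 :: real
  assumes n: "n \<ge> 2" and L: "L > 0" and S2: "S2 \<ge> 0"
    and le: "s2 \<le> S2 + sqrt (L / (8 * real (n div 2)))"
  shows "sqrt ((1 + 2 * s2) / (3 * real n) * L)
    \<le> sqrt ((1 + 2 * S2) / (3 * real n) * L) + sqrt (1 / (12 * real n) * sqrt (8 / real (n div 2)) * L powr (3/2))"
proof -
  define e where "e = sqrt (L / (8 * real (n div 2)))"
  have m: "n div 2 > 0" using n by simp
  have e0: "e \<ge> 0" unfolding e_def using L by simp
  have np: "real n > 0" using n by simp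
  have "(1 + 2 * s2) / (3 * real n) * L \<le> (1 + 2 * (S2 + e)) / (3 * real n) * L"
    using le L np unfolding e_def by (intro mult_right_mono divide_right_mono) auto
  also have "\<dots> = (1 + 2 * S2) / (3 * real n) * L + 2 * e * L / (3 * real n)"
    using np by (simp add: field_simps)
  finally have "sqrt ((1 + 2 * s2) / (3 * real n) * L) \<le> sqrt ((1 + 2 * S2) / (3 * real n) * L + 2 * e * L / (3 * real n))"
    by simp
  also have "\<dots> \<le> sqrt ((1 + 2 * S2) / (3 * real n) * L) + sqrt (2 * e * L / (3 * real n))"
    using S2 L np e0 by (intro sqrt_add_le_add_sqrt) auto
  also have "2 * e * L / (3 * real n) = 1 / (12 * real n) * sqrt (8 / real (n div 2)) * L powr (3/2)"
    unfolding e_def by (rule second_term_eq[OF L m]) (use n in simp)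
  finally show ?thesis .
qed

lemma sample_var_nonneg: "n \<ge> 2 \<Longrightarrow> sample_var n x \<ge> 0"
  unfolding sample_var_def by (intro divide_nonneg_nonneg sum_nonneg) auto

theorem mainTheorem10:
  fixes M :: "'a measure" and X :: "nat \<Rightarrow> 'a \<Rightarrow> real" and n :: nat and \<delta> :: real
  assumes "prob_space M"
    and "n \<ge> 2"
    and "0 < \<delta>" and "\<delta> < 1"
    and "\<And>i. i < n \<Longrightarrow> X i \<in> borel_measurable M"
    and "prob_space.indep_vars M (\<lambda>_. borel) X {..<n}"
    and "\<And>i. i < n \<Longrightarrow> distr M borel (X i) = distr M borel (X 0)"
    and "\<And>i \<omega>. i < n \<Longrightarrow> \<omega> \<in> space M \<Longrightarrow> X i \<omega> \<in> {0..1}"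
  shows "measure M {\<omega> \<in> space M.
            sample_mean n (\<lambda>i. X i \<omega>) - prob_space.expectation M (X 0)
              \<le> emp_bernstein_bound n \<delta> (sample_var n (\<lambda>i. X i \<omega>))} \<ge> 1 - \<delta>
       \<and> measure M {\<omega> \<in> space M.
            prob_space.expectation M (X 0) - sample_mean n (\<lambda>i. X i \<omega>)
              \<le> emp_bernstein_bound n \<delta> (sample_var n (\<lambda>i. X i \<omega>))} \<ge> 1 - \<delta>"
proof -
  interpret prob_space M by fact
  note n = assms(2) and d0 = assms(3) and d1 = assms(4) and Xm = assms(5) and ind = assms(6)
    and dis = assms(7) and Xb = assms(8)
  define L where "L = ln (2 / \<delta>)"
  have L: "L > 0" unfolding L_def using d0 d1 by simp
  have expL: "exp (- L) = \<delta> / 2" unfolding L_def using d0 by (simp add: exp_minus)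
  define \<mu> where "\<mu> = expectation (X 0)"
  define s2 where "s2 = expectation (\<lambda>\<omega>. (X 0 \<omega> - \<mu>)^2)"
  have s20: "s2 \<ge> 0" unfolding s2_def by (intro integral_nonneg_AE AE_I2) auto
  define v where "v = 1 + 2 * s2"
  have v: "v > 0" using s20 by (simp add: v_def)
  have np: "real n > 0" using n by simp
  define b1 where "b1 = sqrt ((1 + 2 * s2) / (3 * real n) * L)"
  define e1 where "e1 = real n * b1"
  have b1p: "b1 > 0" unfolding b1_def using s20 L np by simp
  have e1p: "e1 > 0" using np b1p by (simp add: e1_def)
  have e1sq: "3 * e1^2 / (real n * v) = L"
  proof -
    have "b1^2 = (1 + 2 * s2) / (3 * real n) * L" unfolding b1_def using s20 L np
      by (simp add: real_sqrt_pow2)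
    hence b1sq: "b1^2 = v / (3 * real n) * L" by (simp add: v_def)
    have "e1^2 = real n * v * L / 3" unfolding e1_def power_mult_distrib b1sq using np
      by (simp add: power2_eq_square field_simps)
    moreover have "real n * v > 0" using np v by simp
    ultimately show ?thesis using np v by (simp add: field_simps)
  qed
  define m where "m = n div 2"
  have m0: "real m > 0" using n by (simp add: m_def)
  define e2 where "e2 = sqrt (L / (8 * real m))"
  have e2p: "e2 > 0" unfolding e2_def using L m0 by simp
  have e2sq: "8 * real m * e2^2 = L" unfolding e2_def using L m0 by (simp add: real_sqrt_pow2 field_simps)
  define T where "T = (\<lambda>\<omega>. \<Sum>i<n. (X i \<omega> - \<mu>))"
  define S where "S = (\<lambda>\<omega>. sample_var n (\<lambda>i. X i \<omega>))"
  have Tm[measurable]: "T \<in> borel_measurable M" unfolding T_def using Xm by (intro borel_measurable_sum) auto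
  have Sm[measurable]: "S \<in> borel_measurable M" unfolding S_def by (rule sample_meas(2)[OF Xm])
  have Mm[measurable]: "(\<lambda>\<omega>. sample_mean n (\<lambda>i. X i \<omega>)) \<in> borel_measurable M" by (rule sample_meas(1)[OF Xm])
  have mean_eq: "sample_mean n (\<lambda>i. X i \<omega>) - \<mu> = T \<omega> / real n" for \<omega>
    unfolding sample_mean_def T_def using np by (simp add: sum_subtractf field_simps)
  define C where "C = sqrt (1 / (12 * real n) * sqrt (8 / real (n div 2)) * L powr (3/2))"
  have ebb: "\<And>x. emp_bernstein_bound n \<delta> x = sqrt ((1 + 2 * x) / (3 * real n) * L) + C"
    by (simp add: emp_bernstein_bound_def L_def C_def)
  define Ap where "Ap = {\<omega> \<in> space M. 1 * T \<omega> \<ge> e1}"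
  define Am where "Am = {\<omega> \<in> space M. (-1) * T \<omega> \<ge> e1}"
  define B where "B = {\<omega> \<in> space M. s2 - S \<omega> \<ge> e2}"
  have Ap_s: "Ap \<in> sets M" unfolding Ap_def by measurable
  have Am_s: "Am \<in> sets M" unfolding Am_def by measurable
  have B_s: "B \<in> sets M" unfolding B_def by measurable
  have PA: "prob {\<omega> \<in> space M. s * T \<omega> \<ge> e1} \<le> \<delta> / 2" if "s^2 = 1" for s
  proof -
    have "prob {\<omega> \<in> space M. s * T \<omega> \<ge> e1} \<le> exp (- 3 * e1^2 / (real n * v))"
      unfolding T_def \<mu>_def v_def s2_def
      by (rule mean_tail[OF _ Xm ind dis Xb that e1p]) (use n in simp)
    also have "- 3 * e1^2 / (real n * v) = - L" using e1sq by simp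
    finally show ?thesis using expL by simp
  qed
  have PAp: "prob Ap \<le> \<delta> / 2" using PA[of 1] by (simp add: Ap_def)
  have PAm: "prob Am \<le> \<delta> / 2" using PA[of "-1"] by (simp add: Am_def)
  have PB: "prob B \<le> \<delta> / 2"
  proof -
    have "prob B \<le> exp (- 8 * real (n div 2) * e2^2)"
      unfolding B_def s2_def \<mu>_def S_def
      by (rule var_tail[OF n Xm ind dis Xb e2p])
    also have "- 8 * real (n div 2) * e2^2 = - L" using e2sq by (simp add: m_def)
    finally show ?thesis using expL by simp
  qed
  have key: "b1 \<le> emp_bernstein_bound n \<delta> (S \<omega>)" if "\<omega> \<notin> B" "\<omega> \<in> space M" for \<omega>
  proof -
    have "s2 \<le> S \<omega> + e2" using that by (auto simp: B_def)
    hence "b1 \<le> sqrt ((1 + 2 * S \<omega>) / (3 * real n) * L) + sqrt (1 / (12 * real n) * sqrt (8 / real (n div 2)) * L powr (3/2))"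
      unfolding b1_def e2_def m_def
      by (intro bound_combine[OF n L]) (auto simp: S_def sample_var_nonneg[OF n])
    thus ?thesis by (simp add: emp_bernstein_bound_def L_def)
  qed
  have compl: "prob {\<omega> \<in> space M. P \<omega>} \<ge> 1 - \<delta>"
    if Ps: "{\<omega> \<in> space M. P \<omega>} \<in> sets M" and A_s: "A \<in> sets M" and PA': "prob A \<le> \<delta> / 2"
    and sub: "\<And>\<omega>. \<omega> \<in> space M \<Longrightarrow> \<omega> \<notin> A \<Longrightarrow> \<omega> \<notin> B \<Longrightarrow> P \<omega>" for P A
  proof -
    have "space M - (A \<union> B) \<subseteq> {\<omega> \<in> space M. P \<omega>}" using sub by auto
    hence "prob (space M - (A \<union> B)) \<le> prob {\<omega> \<in> space M. P \<omega>}"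
      by (intro finite_measure_mono Ps)
    moreover have "prob (space M - (A \<union> B)) = 1 - prob (A \<union> B)"
      using A_s B_s by (intro prob_compl) auto
    moreover have "prob (A \<union> B) \<le> prob A + prob B"
      using A_s B_s by (intro measure_subadditive) (auto simp: emeasure_eq_measure)
    ultimately show ?thesis using PA' PB by linarith
  qed
  have G1: "prob {\<omega> \<in> space M. sample_mean n (\<lambda>i. X i \<omega>) - \<mu> \<le> emp_bernstein_bound n \<delta> (S \<omega>)} \<ge> 1 - \<delta>"
  proof (rule compl[OF _ Ap_s PAp])
    show "{\<omega> \<in> space M. sample_mean n (\<lambda>i. X i \<omega>) - \<mu> \<le> emp_bernstein_bound n \<delta> (S \<omega>)} \<in> sets M"
      unfolding ebb by measurable
    fix \<omega> assume w: "\<omega> \<in> space M" "\<omega> \<notin> Ap" "\<omega> \<notin> B"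
    have "T \<omega> < e1" using w by (auto simp: Ap_def)
    hence "T \<omega> / real n < b1" using np by (simp add: e1_def divide_less_eq mult.commute)
    thus "sample_mean n (\<lambda>i. X i \<omega>) - \<mu> \<le> emp_bernstein_bound n \<delta> (S \<omega>)"
      using key[OF w(3) w(1)] mean_eq[of \<omega>] by linarith
  qed
  have G2: "prob {\<omega> \<in> space M. \<mu> - sample_mean n (\<lambda>i. X i \<omega>) \<le> emp_bernstein_bound n \<delta> (S \<omega>)} \<ge> 1 - \<delta>"
  proof (rule compl[OF _ Am_s PAm])
    show "{\<omega> \<in> space M. \<mu> - sample_mean n (\<lambda>i. X i \<omega>) \<le> emp_bernstein_bound n \<delta> (S \<omega>)} \<in> sets M"
      unfolding ebb by measurable
    fix \<omega> assume w: "\<omega> \<in> space M" "\<omega> \<notin> Am" "\<omega> \<notin> B"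
    have "- T \<omega> < e1" using w by (auto simp: Am_def)
    hence "- b1 < T \<omega> / real n" using np by (simp add: e1_def field_simps)
    thus "\<mu> - sample_mean n (\<lambda>i. X i \<omega>) \<le> emp_bernstein_bound n \<delta> (S \<omega>)"
      using key[OF w(3) w(1)] mean_eq[of \<omega>] by linarith
  qed
  show ?thesis using G1 G2 by (simp add: \<mu>_def S_def)
qed


end
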